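(* Let $k,n$ be positive integers and let $$C_{k,n,1}=\inf_{v}\ \sup_{0\neq f\in\ell^2(\mathbb{Z})}\frac{\|\nabla^{k}(v\ast f)\|_{\ell^2(\mathbb{Z})}}{\|f\|_{\ell^2(\mathbb{Z})}},$$ where the infimum is over all $v:\{-n,\dots,n\}\to\mathbb{R}$ with $v(j)=v(-j)$ for all $j$ and $\sum_{j=-n}^{n}v(j)=1$. Then for every $u:\{-n,\dots,n\}\to\mathbb{C}$ with $\sum_{j=-n}^{n}u(j)=1$, $$\sup_{0\neq f\in\ell^2(\mathbb{Z})}\frac{\|\nabla^{k}(u\ast f)\|_{\ell^2(\mathbb{Z})}}{\|f\|_{\ell^2(\mathbb{Z})}}\ \ge\ C_{k,n,1}.$$
   Context: Functions on $\{-n,\dots,n\}$ are regarded as functions on $\mathbb{Z}$ vanishing outside it; $\nabla g(k)=g(k+1)-g(k)$, $\nabla^{k}=\nabla(\nabla^{k-1})$; $(u\ast f)(m)=\sum_ju(j)f(m-j)$. Suprema are over nonzero complex-valued $f\in\ell^2(\mathbb{Z})$. *)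

theory Defs
  imports "HOL-Analysis.Analysis"
begin

definition is_l2 :: "(int \<Rightarrow> complex) \<Rightarrow> bool" where
  "is_l2 f \<longleftrightarrow> (\<lambda>j. (norm (f j))^2) summable_on UNIV"

definition l2norm :: "(int \<Rightarrow> complex) \<Rightarrow> real" where
  "l2norm f = sqrt (\<Sum>\<^sub>\<infinity>j\<in>UNIV. (norm (f j))^2)"

definition fdiff :: "(int \<Rightarrow> complex) \<Rightarrow> int \<Rightarrow> complex" where
  "fdiff g = (\<lambda>m. g (m + 1) - g m)"

definition conv :: "(int \<Rightarrow> complex) \<Rightarrow> (int \<Rightarrow> complex) \<Rightarrow> int \<Rightarrow> complex" where
  "conv u f = (\<lambda>m. \<Sum>\<^sub>\<infinity>j\<in>UNIV. u j * f (m - j))"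

definition opnorm :: "nat \<Rightarrow> (int \<Rightarrow> complex) \<Rightarrow> real" where
  "opnorm k u = Sup {l2norm ((fdiff ^^ k) (conv u f)) / l2norm f | f. is_l2 f \<and> f \<noteq> (\<lambda>_. 0)}"

definition Cconst :: "nat \<Rightarrow> nat \<Rightarrow> real" where
  "Cconst k n = Inf {opnorm k (\<lambda>j. complex_of_real (v j)) | v :: int \<Rightarrow> real.
      (\<forall>j. j \<notin> {- int n..int n} \<longrightarrow> v j = 0) \<and> (\<forall>j. v j = v (- j)) \<and>
      (\<Sum>j = - int n..int n. v j) = 1}"

end

theory Submission
  imports Defs
begin

lemma l2norm_sq: "(l2norm f)^2 = (\<Sum>\<^sub>\<infinity>j\<in>UNIV. (norm (f j))^2)"
  unfolding l2norm_def by (simp add: infsum_nonneg)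

lemma l2norm_nonneg: "l2norm f \<ge> 0"
  unfolding l2norm_def by (simp add: infsum_nonneg)

lemma l2_fin_le: "is_l2 f \<Longrightarrow> finite F \<Longrightarrow> (\<Sum>j\<in>F. (norm (f j))^2) \<le> (l2norm f)^2"
  unfolding l2norm_sq is_l2_def by (rule finite_sum_le_infsum) auto

lemma l2_fin_le': "is_l2 f \<Longrightarrow> finite F \<Longrightarrow> L2_set (\<lambda>j. norm (f j)) F \<le> l2norm f"
  unfolding L2_set_def using l2_fin_le[of f F] l2norm_nonneg[of f]
  by (simp add: real_le_lsqrt sum_nonneg)

lemma l2_add:
  assumes "is_l2 f" "is_l2 g"
  shows "is_l2 (\<lambda>m. f m + g m) \<and> l2norm (\<lambda>m. f m + g m) \<le> l2norm f + l2norm g"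
proof
  have "(\<lambda>j. 2 * (norm (f j))^2 + 2 * (norm (g j))^2) summable_on UNIV"
    using assms unfolding is_l2_def
    by (intro summable_on_add summable_on_cmult_right) (auto simp del: norm_power)
  moreover have "(norm (f j + g j))^2 \<le> 2 * (norm (f j))^2 + 2 * (norm (g j))^2" for j
  proof -
    have "norm (f j + g j) \<le> norm (f j) + norm (g j)" by (rule norm_triangle_ineq)
    hence "(norm (f j + g j))^2 \<le> (norm (f j) + norm (g j))^2"
      by (intro power_mono) auto
    also have "\<dots> \<le> 2 * (norm (f j))^2 + 2 * (norm (g j))^2"
      using zero_le_power2[of "norm (f j) - norm (g j)"] unfolding power2_diff power2_sum by linarith
    finally show ?thesis .
  qed
  ultimately show S: "is_l2 (\<lambda>m. f m + g m)"
    unfolding is_l2_def by (rule summable_on_comparison_test) auto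
  have "(l2norm (\<lambda>m. f m + g m))^2 \<le> (l2norm f + l2norm g)^2"
    unfolding l2norm_sq
  proof (rule infsum_le_finite_sums)
    show "(\<lambda>j. (norm (f j + g j))^2) summable_on UNIV" using S unfolding is_l2_def .
    fix F :: "int set" assume F: "finite F"
    have "L2_set (\<lambda>j. norm (f j + g j)) F \<le> L2_set (\<lambda>j. norm (f j) + norm (g j)) F"
      by (rule L2_set_mono) (auto intro: norm_triangle_ineq)
    also have "\<dots> \<le> L2_set (\<lambda>j. norm (f j)) F + L2_set (\<lambda>j. norm (g j)) F"
      by (rule L2_set_triangle_ineq)
    also have "\<dots> \<le> l2norm f + l2norm g"
      using l2_fin_le'[OF assms(1) F] l2_fin_le'[OF assms(2) F] by simp
    finally have "L2_set (\<lambda>j. norm (f j + g j)) F \<le> l2norm f + l2norm g" .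
    moreover have "L2_set (\<lambda>j. norm (f j + g j)) F \<ge> 0" by (rule L2_set_nonneg)
    ultimately have "(L2_set (\<lambda>j. norm (f j + g j)) F)^2 \<le> (l2norm f + l2norm g)^2"
      by (intro power_mono) auto
    thus "(\<Sum>j\<in>F. (norm (f j + g j))^2) \<le> (l2norm f + l2norm g)^2"
      unfolding L2_set_def by (simp add: sum_nonneg)
  qed
  thus "l2norm (\<lambda>m. f m + g m) \<le> l2norm f + l2norm g"
    using l2norm_nonneg[of f] l2norm_nonneg[of g] l2norm_nonneg[of "\<lambda>m. f m + g m"]
    by (meson power2_le_imp_le add_nonneg_nonneg)
qed

lemma l2_scale:
  assumes "is_l2 f"
  shows "is_l2 (\<lambda>m. c * f m) \<and> l2norm (\<lambda>m. c * f m) = norm c * l2norm f"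
proof
  show "is_l2 (\<lambda>m. c * f m)" using assms unfolding is_l2_def
    by (simp add: norm_mult power_mult_distrib summable_on_cmult_right)
  show "l2norm (\<lambda>m. c * f m) = norm c * l2norm f"
    unfolding l2norm_def by (simp add: norm_mult power_mult_distrib infsum_cmult_right' real_sqrt_mult)
qed

lemma l2_reindex:
  assumes "bij h"
  shows "is_l2 (\<lambda>m. f (h m)) = is_l2 f" "l2norm (\<lambda>m. f (h m)) = l2norm f"
  unfolding is_l2_def l2norm_def
  using summable_on_reindex_bij_betw[OF assms, of "\<lambda>j. (norm (f j))^2"]
    infsum_reindex_bij_betw[OF assms, of "\<lambda>j. (norm (f j))^2"] by auto

lemma l2_cnj: "is_l2 (\<lambda>m. cnj (f m)) = is_l2 f" "l2norm (\<lambda>m. cnj (f m)) = l2norm f"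
  unfolding is_l2_def l2norm_def by auto

lemma l2_zero: "is_l2 (\<lambda>_. 0)" "l2norm (\<lambda>_. 0) = 0"
  unfolding is_l2_def l2norm_def by auto

lemma l2_sum:
  assumes "finite A" "\<forall>i\<in>A. is_l2 (g i)"
  shows "is_l2 (\<lambda>m. \<Sum>i\<in>A. g i m) \<and> l2norm (\<lambda>m. \<Sum>i\<in>A. g i m) \<le> (\<Sum>i\<in>A. l2norm (g i))"
  using assms
proof (induction A rule: finite_induct)
  case empty then show ?case using l2_zero by simp
next
  case (insert a A)
  then have IH: "is_l2 (\<lambda>m. \<Sum>i\<in>A. g i m)" "l2norm (\<lambda>m. \<Sum>i\<in>A. g i m) \<le> (\<Sum>i\<in>A. l2norm (g i))"
    and ga: "is_l2 (g a)" by auto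
  have e: "(\<lambda>m. \<Sum>i\<in>insert a A. g i m) = (\<lambda>m. g a m + (\<Sum>i\<in>A. g i m))"
    using insert by simp
  show ?case unfolding e using l2_add[OF ga IH(1)] IH(2) insert by auto
qed

lemma l2norm_pos:
  assumes "is_l2 f" "f \<noteq> (\<lambda>_. 0)"
  shows "l2norm f > 0"
proof -
  obtain j where j: "f j \<noteq> 0" using assms by auto
  have "(norm (f j))^2 \<le> (l2norm f)^2" using l2_fin_le[OF assms(1), of "{j}"] by simp
  moreover have "0 < (norm (f j))^2" using j by simp
  ultimately have "(l2norm f)^2 > 0" by linarith
  thus ?thesis using l2norm_nonneg[of f] by (cases "l2norm f = 0") auto
qed


lemma conv_fin:
  assumes "finite I" "\<forall>j. j \<notin> I \<longrightarrow> w j = 0"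
  shows "conv w f = (\<lambda>m. \<Sum>j\<in>I. w j * f (m - j))"
  unfolding conv_def
proof
  fix m
  have "(\<Sum>\<^sub>\<infinity>j\<in>UNIV. w j * f (m - j)) = (\<Sum>\<^sub>\<infinity>j\<in>I. w j * f (m - j))"
    by (rule infsum_cong_neutral) (use assms in auto)
  also have "\<dots> = (\<Sum>j\<in>I. w j * f (m - j))" using assms(1) by simp
  finally show "(\<Sum>\<^sub>\<infinity>j\<in>UNIV. w j * f (m - j)) = (\<Sum>j\<in>I. w j * f (m - j))" .
qed

lemma shift_l2:
  assumes "is_l2 f"
  shows "is_l2 (\<lambda>m. f (m + c))" "l2norm (\<lambda>m. f (m + c)) = l2norm f"
proof -
  have b: "bij (\<lambda>m::int. m + c)" by (rule bij_betwI[where g="\<lambda>m. m - c"]) auto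
  show "is_l2 (\<lambda>m. f (m + c))" "l2norm (\<lambda>m. f (m + c)) = l2norm f"
    using l2_reindex[OF b, of f] assms by auto
qed

lemma conv_l2:
  assumes "finite I" "\<forall>j. j \<notin> I \<longrightarrow> w j = 0" "is_l2 f"
  shows "is_l2 (conv w f) \<and> l2norm (conv w f) \<le> (\<Sum>j\<in>I. norm (w j)) * l2norm f"
proof -
  have each: "is_l2 (\<lambda>m. w j * f (m - j)) \<and> l2norm (\<lambda>m. w j * f (m - j)) = norm (w j) * l2norm f" for j
  proof -
    have "is_l2 (\<lambda>m. f (m + (-j)))" "l2norm (\<lambda>m. f (m + (-j))) = l2norm f"
      using shift_l2[OF assms(3), of "-j"] by simp_all
    thus ?thesis using l2_scale[of "\<lambda>m. f (m + (-j))" "w j"] by simp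
  qed
  have "is_l2 (\<lambda>m. \<Sum>j\<in>I. w j * f (m - j)) \<and> l2norm (\<lambda>m. \<Sum>j\<in>I. w j * f (m - j)) \<le> (\<Sum>j\<in>I. l2norm (\<lambda>m. w j * f (m - j)))"
    using l2_sum[OF assms(1), of "\<lambda>j m. w j * f (m - j)"] each by auto
  moreover have "(\<Sum>j\<in>I. l2norm (\<lambda>m. w j * f (m - j))) = (\<Sum>j\<in>I. norm (w j)) * l2norm f"
    using each by (simp add: sum_distrib_right)
  ultimately show ?thesis using conv_fin[OF assms(1,2), of f] by simp
qed

lemma fdiff_l2:
  assumes "is_l2 g"
  shows "is_l2 (fdiff g) \<and> l2norm (fdiff g) \<le> 2 * l2norm g"
proof -
  have a: "is_l2 (\<lambda>m. g (m + 1))" "l2norm (\<lambda>m. g (m + 1)) = l2norm g" using shift_l2[OF assms] by auto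
  have b: "is_l2 (\<lambda>m. (-1) * g m)" "l2norm (\<lambda>m. (-1) * g m) = l2norm g" using l2_scale[OF assms, of "-1"] by auto
  have e: "fdiff g = (\<lambda>m. g (m + 1) + (-1) * g m)" unfolding fdiff_def by auto
  show ?thesis unfolding e using l2_add[OF a(1) b(1)] a(2) b(2) by auto
qed

lemma fdiffk_l2:
  assumes "is_l2 g"
  shows "is_l2 ((fdiff ^^ k) g) \<and> l2norm ((fdiff ^^ k) g) \<le> 2^k * l2norm g"
proof (induction k)
  case 0 then show ?case using assms by simp
next
  case (Suc k)
  then have h: "is_l2 ((fdiff ^^ k) g)" "l2norm ((fdiff ^^ k) g) \<le> 2^k * l2norm g" by auto
  have "is_l2 (fdiff ((fdiff ^^ k) g)) \<and> l2norm (fdiff ((fdiff ^^ k) g)) \<le> 2 * l2norm ((fdiff ^^ k) g)"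
    by (rule fdiff_l2[OF h(1)])
  moreover have "2 * l2norm ((fdiff ^^ k) g) \<le> 2 * (2^k * l2norm g)" using h(2) by simp
  ultimately show ?case by simp
qed

lemma fdiffk4:
  "(fdiff ^^ k) (\<lambda>m. c * (A m + B m + C m + D m)) =
   (\<lambda>m. c * ((fdiff ^^ k) A m + (fdiff ^^ k) B m + (fdiff ^^ k) C m + (fdiff ^^ k) D m))"
  by (induction k) (auto simp: fdiff_def algebra_simps)

lemma fdiffk_cnj: "(fdiff ^^ k) (\<lambda>m. cnj (g m)) = (\<lambda>m. cnj ((fdiff ^^ k) g m))"
  by (induction k) (auto simp: fdiff_def)

lemma fdiff_apply: "fdiff g m = g (m + 1) - g m"
  by (simp add: fdiff_def)

lemma fdiffk_refl: "(fdiff ^^ k) (\<lambda>m. g (- m)) = (\<lambda>m. (-1)^k * (fdiff ^^ k) g (- m - int k))"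
proof (induction k)
  case 0 show ?case by simp
next
  case (Suc k)
  show ?case
  proof
    fix m
    define G where "G = (fdiff ^^ k) g"
    have IH: "(fdiff ^^ k) (\<lambda>m. g (- m)) = (\<lambda>m. (-1)^k * G (- m - int k))" using Suc G_def by simp
    have e1: "G (- (m + 1) - int k) = G (- m - int (Suc k))" by (rule arg_cong[where f="G"]) simp
    have e2: "G (- m - int k) = G (- m - int (Suc k) + 1)" by (rule arg_cong[where f="G"]) simp
    have "(fdiff ^^ Suc k) (\<lambda>m. g (- m)) m = fdiff ((fdiff ^^ k) (\<lambda>m. g (- m))) m" by simp
    also have "\<dots> = (-1)^k * G (- (m + 1) - int k) - (-1)^k * G (- m - int k)"
      unfolding IH fdiff_apply by simp
    also have "\<dots> = (-1) ^ Suc k * (G (- m - int (Suc k) + 1) - G (- m - int (Suc k)))"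
      unfolding e1 e2 by (simp add: algebra_simps)
    also have "\<dots> = (-1) ^ Suc k * fdiff G (- m - int (Suc k))"
      unfolding fdiff_apply by simp
    also have "\<dots> = (-1) ^ Suc k * (fdiff ^^ Suc k) g (- m - int (Suc k))"
      unfolding G_def by simp
    finally show "(fdiff ^^ Suc k) (\<lambda>m. g (- m)) m = (-1) ^ Suc k * (fdiff ^^ Suc k) g (- m - int (Suc k))" .
  qed
qed

lemma conv_cnj:
  assumes "finite I" "\<forall>j. j \<notin> I \<longrightarrow> w j = 0"
  shows "conv (\<lambda>j. cnj (w j)) f = (\<lambda>m. cnj (conv w (\<lambda>m. cnj (f m)) m))"
proof -
  have s: "\<forall>j. j \<notin> I \<longrightarrow> cnj (w j) = 0" using assms(2) by simp
  show ?thesis unfolding conv_fin[OF assms(1) s] conv_fin[OF assms] by simp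
qed

lemma conv_refl:
  assumes "\<forall>j. j \<notin> {- N..N} \<longrightarrow> w j = 0"
  shows "conv (\<lambda>j. w (- j)) f = (\<lambda>m. conv w (\<lambda>m. f (- m)) (- m))"
proof -
  have s: "\<forall>j. j \<notin> {- N..N} \<longrightarrow> w (- j) = 0" using assms by auto
  show ?thesis unfolding conv_fin[OF finite_atLeastAtMost_int s] conv_fin[OF finite_atLeastAtMost_int assms]
  proof
    fix m
    show "(\<Sum>j\<in>{- N..N}. w (- j) * f (m - j)) = (\<Sum>j\<in>{- N..N}. w j * f (- (- m - j)))"
      by (rule sum.reindex_bij_witness[where i=uminus and j=uminus]) auto
  qed
qed


definition Sset :: "nat \<Rightarrow> (int \<Rightarrow> complex) \<Rightarrow> real set" where
  "Sset k w = {l2norm ((fdiff ^^ k) (conv w f)) / l2norm f | f. is_l2 f \<and> f \<noteq> (\<lambda>_. 0)}"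

lemma opnorm_Sset: "opnorm k w = Sup (Sset k w)"
  by (simp add: opnorm_def Sset_def)

lemma T_bound:
  assumes "\<forall>j. j \<notin> {- N..N} \<longrightarrow> w j = 0" "is_l2 f"
  shows "is_l2 ((fdiff ^^ k) (conv w f)) \<and>
    l2norm ((fdiff ^^ k) (conv w f)) \<le> 2^k * (\<Sum>j\<in>{- N..N}. norm (w j)) * l2norm f"
proof -
  have c: "is_l2 (conv w f) \<and> l2norm (conv w f) \<le> (\<Sum>j\<in>{- N..N}. norm (w j)) * l2norm f"
    by (rule conv_l2[OF finite_atLeastAtMost_int assms])
  then have d: "is_l2 ((fdiff ^^ k) (conv w f)) \<and> l2norm ((fdiff ^^ k) (conv w f)) \<le> 2^k * l2norm (conv w f)"
    using fdiffk_l2 by blast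
  have "2^k * l2norm (conv w f) \<le> 2^k * ((\<Sum>j\<in>{- N..N}. norm (w j)) * l2norm f)" using c by simp
  hence "l2norm ((fdiff ^^ k) (conv w f)) \<le> 2^k * ((\<Sum>j\<in>{- N..N}. norm (w j)) * l2norm f)"
    using d by linarith
  thus ?thesis using d by (simp add: mult.assoc)
qed

definition delta :: "int \<Rightarrow> complex" where "delta = (\<lambda>j. if j = 0 then 1 else 0)"

lemma delta_l2: "is_l2 delta" "delta \<noteq> (\<lambda>_. 0)"
proof -
  have "(\<lambda>j. (norm (delta j))^2) summable_on {0}" by simp
  moreover have "((\<lambda>j. (norm (delta j))^2) summable_on {0}) = ((\<lambda>j. (norm (delta j))^2) summable_on UNIV)"
    by (rule summable_on_cong_neutral) (auto simp: delta_def)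
  ultimately show "is_l2 delta" unfolding is_l2_def by simp
  show "delta \<noteq> (\<lambda>_. 0)" unfolding delta_def by (metis one_neq_zero)
qed

lemma Sset_props:
  assumes "\<forall>j. j \<notin> {- N..N} \<longrightarrow> w j = 0"
  shows "Sset k w \<noteq> {}" "bdd_above (Sset k w)"
proof -
  show "Sset k w \<noteq> {}" unfolding Sset_def using delta_l2 by blast
  let ?B = "2^k * (\<Sum>j\<in>{- N..N}. norm (w j))"
  have "x \<le> ?B" if xS: "x \<in> Sset k w" for x
  proof -
    obtain f where f: "x = l2norm ((fdiff ^^ k) (conv w f)) / l2norm f" "is_l2 f" "f \<noteq> (\<lambda>_. 0)"
      using xS unfolding Sset_def by blast
    have p: "l2norm f > 0" by (rule l2norm_pos[OF f(2,3)])
    have "l2norm ((fdiff ^^ k) (conv w f)) \<le> ?B * l2norm f" using T_bound[OF assms f(2), of k] by simp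
    thus ?thesis unfolding f(1) using p by (simp add: divide_le_eq)
  qed
  thus "bdd_above (Sset k w)" by (rule bdd_aboveI)
qed

lemma opnorm_nonneg:
  assumes "\<forall>j. j \<notin> {- N..N} \<longrightarrow> w j = 0"
  shows "0 \<le> opnorm k w"
proof -
  have "l2norm ((fdiff ^^ k) (conv w delta)) / l2norm delta \<in> Sset k w"
    unfolding Sset_def using delta_l2 by blast
  hence "l2norm ((fdiff ^^ k) (conv w delta)) / l2norm delta \<le> opnorm k w"
    unfolding opnorm_Sset by (rule cSup_upper[OF _ Sset_props(2)[OF assms]])
  moreover have "0 \<le> l2norm ((fdiff ^^ k) (conv w delta)) / l2norm delta"
    using l2norm_nonneg by simp
  ultimately show ?thesis by linarith
qed

lemma opnorm_bound:
  assumes "\<forall>j. j \<notin> {- N..N} \<longrightarrow> w j = 0" "is_l2 f"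
  shows "l2norm ((fdiff ^^ k) (conv w f)) \<le> opnorm k w * l2norm f"
proof (cases "f = (\<lambda>_. 0)")
  case True
  have "l2norm ((fdiff ^^ k) (conv w f)) \<le> 2^k * (\<Sum>j\<in>{- N..N}. norm (w j)) * l2norm f"
    using T_bound[OF assms] by blast
  then show ?thesis using True l2_zero by simp
next
  case False
  have p: "l2norm f > 0" by (rule l2norm_pos[OF assms(2) False])
  have "l2norm ((fdiff ^^ k) (conv w f)) / l2norm f \<in> Sset k w"
    unfolding Sset_def using assms(2) False by blast
  hence "l2norm ((fdiff ^^ k) (conv w f)) / l2norm f \<le> opnorm k w"
    unfolding opnorm_Sset by (rule cSup_upper[OF _ Sset_props(2)[OF assms(1)]])
  thus ?thesis using p by (simp add: divide_le_eq)
qed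

lemma T_cnj:
  assumes "\<forall>j. j \<notin> {- N..N} \<longrightarrow> w j = 0" "is_l2 f"
  shows "is_l2 ((fdiff ^^ k) (conv (\<lambda>j. cnj (w j)) f)) \<and>
    l2norm ((fdiff ^^ k) (conv (\<lambda>j. cnj (w j)) f)) \<le> opnorm k w * l2norm f"
proof -
  have cf: "is_l2 (\<lambda>m. cnj (f m))" "l2norm (\<lambda>m. cnj (f m)) = l2norm f" using l2_cnj assms(2) by auto
  have e: "(fdiff ^^ k) (conv (\<lambda>j. cnj (w j)) f) = (\<lambda>m. cnj ((fdiff ^^ k) (conv w (\<lambda>m. cnj (f m))) m))"
    unfolding conv_cnj[OF finite_atLeastAtMost_int assms(1)] fdiffk_cnj ..
  show ?thesis unfolding e l2_cnj
    using T_bound[OF assms(1) cf(1), of k] opnorm_bound[OF assms(1) cf(1), of k] cf(2) by simp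
qed

lemma refl_bij: "bij (\<lambda>m::int. - m - c)"
  by (rule bij_betwI[where g="\<lambda>m. - m - c"]) auto

lemma T_refl:
  assumes "\<forall>j. j \<notin> {- N..N} \<longrightarrow> w j = 0" "is_l2 f"
  shows "is_l2 ((fdiff ^^ k) (conv (\<lambda>j. w (- j)) f)) \<and>
    l2norm ((fdiff ^^ k) (conv (\<lambda>j. w (- j)) f)) = l2norm ((fdiff ^^ k) (conv w (\<lambda>m. f (- m))))"
    "is_l2 (\<lambda>m. f (- m))" "l2norm (\<lambda>m. f (- m)) = l2norm f"
proof -
  have b0: "bij (\<lambda>m::int. - m - 0)" by (rule refl_bij)
  show rf: "is_l2 (\<lambda>m. f (- m))" "l2norm (\<lambda>m. f (- m)) = l2norm f"
    using l2_reindex[OF b0, of f] assms(2) by auto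
  let ?G = "(fdiff ^^ k) (conv w (\<lambda>m. f (- m)))"
  have G: "is_l2 ?G" using T_bound[OF assms(1) rf(1)] by blast
  have e: "(fdiff ^^ k) (conv (\<lambda>j. w (- j)) f) = (\<lambda>m. (-1)^k * ?G (- m - int k))"
    unfolding conv_refl[OF assms(1)] fdiffk_refl ..
  have r: "is_l2 (\<lambda>m. ?G (- m - int k))" "l2norm (\<lambda>m. ?G (- m - int k)) = l2norm ?G"
    using l2_reindex[OF refl_bij[of "int k"], of ?G] G by auto
  show "is_l2 ((fdiff ^^ k) (conv (\<lambda>j. w (- j)) f)) \<and>
    l2norm ((fdiff ^^ k) (conv (\<lambda>j. w (- j)) f)) = l2norm ?G"
    unfolding e using l2_scale[OF r(1), of "(-1)^k"] r(2) by (simp add: norm_power)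
qed


theorem lemma5p1:
  fixes k n :: nat and u :: "int \<Rightarrow> complex"
  assumes "k > 0" and "n > 0"
    and "\<forall>j. j \<notin> {- int n..int n} \<longrightarrow> u j = 0"
    and "(\<Sum>j = - int n..int n. u j) = 1"
  shows "opnorm k u \<ge> Cconst k n"
proof -
  let ?I = "{- int n..int n}"
  have su: "\<forall>j. j \<notin> ?I \<longrightarrow> u j = 0" by (rule assms(3))
  define u1 where "u1 = (\<lambda>j. cnj (u j))"
  have su1: "\<forall>j. j \<notin> ?I \<longrightarrow> u1 j = 0" using su unfolding u1_def by simp
  define v where "v = (\<lambda>j. Re (u j + u (- j)) / 2)"
  define vc where "vc = (\<lambda>j. complex_of_real (v j))"
  have vsupp: "\<forall>j. j \<notin> ?I \<longrightarrow> v j = 0"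
  proof (intro allI impI)
    fix j assume "j \<notin> ?I"
    moreover hence "- j \<notin> ?I" by auto
    ultimately show "v j = 0" using su unfolding v_def by simp
  qed
  have vsym: "\<forall>j. v j = v (- j)" unfolding v_def by (simp add: add.commute)
  have refl_sum: "(\<Sum>j\<in>?I. g (- j)) = (\<Sum>j\<in>?I. g j)" for g :: "int \<Rightarrow> complex"
    by (rule sum.reindex_bij_witness[where i=uminus and j=uminus]) auto
  have vsum: "(\<Sum>j\<in>?I. v j) = 1"
  proof -
    have "(\<Sum>j\<in>?I. v j) = (Re (\<Sum>j\<in>?I. u j) + Re (\<Sum>j\<in>?I. u (- j))) / 2"
      unfolding v_def sum_divide_distrib[symmetric] by (simp add: sum.distrib)
    also have "\<dots> = 1" using refl_sum[of u] assms(4) by simp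
    finally show ?thesis .
  qed
  have vsuppc: "\<forall>j. j \<notin> ?I \<longrightarrow> vc j = 0" using vsupp unfolding vc_def by simp
  have mem: "opnorm k vc \<in> {opnorm k (\<lambda>j. complex_of_real (v j)) | v :: int \<Rightarrow> real.
      (\<forall>j. j \<notin> {- int n..int n} \<longrightarrow> v j = 0) \<and> (\<forall>j. v j = v (- j)) \<and>
      (\<Sum>j = - int n..int n. v j) = 1}"
    unfolding vc_def using vsupp vsym vsum by blast
  have bdd: "bdd_below {opnorm k (\<lambda>j. complex_of_real (v j)) | v :: int \<Rightarrow> real.
      (\<forall>j. j \<notin> {- int n..int n} \<longrightarrow> v j = 0) \<and> (\<forall>j. v j = v (- j)) \<and>
      (\<Sum>j = - int n..int n. v j) = 1}"
  proof (rule bdd_belowI[where m=0])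
    fix x assume "x \<in> {opnorm k (\<lambda>j. complex_of_real (v j)) | v :: int \<Rightarrow> real.
      (\<forall>j. j \<notin> {- int n..int n} \<longrightarrow> v j = 0) \<and> (\<forall>j. v j = v (- j)) \<and>
      (\<Sum>j = - int n..int n. v j) = 1}"
    then obtain w :: "int \<Rightarrow> real" where w: "x = opnorm k (\<lambda>j. complex_of_real (w j))"
      "\<forall>j. j \<notin> ?I \<longrightarrow> w j = 0" by blast
    have "\<forall>j. j \<notin> ?I \<longrightarrow> complex_of_real (w j) = 0" using w(2) by simp
    thus "0 \<le> x" unfolding w(1) by (rule opnorm_nonneg)
  qed
  have C: "Cconst k n \<le> opnorm k vc"
    unfolding Cconst_def by (rule cInf_lower[OF mem bdd])
  have vc_eq: "vc j = (u j + u1 j + u (- j) + u1 (- j)) / 4" for j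
  proof -
    have h1: "complex_of_real (2 * Re (u j)) = u j + u1 j" unfolding u1_def by (rule complex_add_cnj[symmetric])
    have h2: "complex_of_real (2 * Re (u (- j))) = u (- j) + u1 (- j)" unfolding u1_def by (rule complex_add_cnj[symmetric])
    have "vc j = (complex_of_real (2 * Re (u j)) + complex_of_real (2 * Re (u (- j)))) / 4"
      unfolding vc_def v_def by simp
    thus ?thesis unfolding h1 h2 by (simp add: add.assoc)
  qed
  have conv_eq: "conv vc f = (\<lambda>m. (1/4) * (conv u f m + conv u1 f m + conv (\<lambda>j. u (- j)) f m + conv (\<lambda>j. u1 (- j)) f m))"
    for f
  proof -
    have s2: "\<forall>j. j \<notin> ?I \<longrightarrow> u (- j) = 0" using su by auto
    have s3: "\<forall>j. j \<notin> ?I \<longrightarrow> u1 (- j) = 0" using su1 by auto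
    show ?thesis
      unfolding conv_fin[OF finite_atLeastAtMost_int vsuppc] conv_fin[OF finite_atLeastAtMost_int su]
        conv_fin[OF finite_atLeastAtMost_int su1] conv_fin[OF finite_atLeastAtMost_int s2]
        conv_fin[OF finite_atLeastAtMost_int s3] vc_eq
      by (simp add: sum_distrib_left sum.distrib[symmetric] algebra_simps) (simp add: add_divide_distrib)
  qed
  have key: "l2norm ((fdiff ^^ k) (conv vc f)) \<le> opnorm k u * l2norm f" if f: "is_l2 f" for f
  proof -
    let ?A = "(fdiff ^^ k) (conv u f)"
    let ?B = "(fdiff ^^ k) (conv u1 f)"
    let ?C = "(fdiff ^^ k) (conv (\<lambda>j. u (- j)) f)"
    let ?D = "(fdiff ^^ k) (conv (\<lambda>j. u1 (- j)) f)"
    have A: "is_l2 ?A" "l2norm ?A \<le> opnorm k u * l2norm f"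
      using T_bound[OF su f, of k] opnorm_bound[OF su f, of k] by auto
    have B: "is_l2 ?B" "l2norm ?B \<le> opnorm k u * l2norm f"
      using T_cnj[OF su f, of k] unfolding u1_def by auto
    obtain rf: "is_l2 (\<lambda>m. f (- m))" "l2norm (\<lambda>m. f (- m)) = l2norm f"
      using T_refl(2,3)[OF su f] by blast
    have C: "is_l2 ?C" "l2norm ?C \<le> opnorm k u * l2norm f"
      using T_refl(1)[OF su f, of k] opnorm_bound[OF su rf(1), of k] rf(2) by auto
    have D: "is_l2 ?D" "l2norm ?D \<le> opnorm k u * l2norm f"
      using T_refl(1)[OF su1 f, of k] T_cnj[OF su rf(1), of k] rf(2) unfolding u1_def by auto
    have e: "(fdiff ^^ k) (conv vc f) = (\<lambda>m. (1/4) * (?A m + ?B m + ?C m + ?D m))"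
      unfolding conv_eq fdiffk4 ..
    have AB: "is_l2 (\<lambda>m. ?A m + ?B m)" "l2norm (\<lambda>m. ?A m + ?B m) \<le> l2norm ?A + l2norm ?B"
      using l2_add[OF A(1) B(1)] by auto
    have ABC: "is_l2 (\<lambda>m. ?A m + ?B m + ?C m)" "l2norm (\<lambda>m. ?A m + ?B m + ?C m) \<le> l2norm (\<lambda>m. ?A m + ?B m) + l2norm ?C"
      using l2_add[OF AB(1) C(1)] by auto
    have ABCD: "is_l2 (\<lambda>m. ?A m + ?B m + ?C m + ?D m)" "l2norm (\<lambda>m. ?A m + ?B m + ?C m + ?D m) \<le> l2norm (\<lambda>m. ?A m + ?B m + ?C m) + l2norm ?D"
      using l2_add[OF ABC(1) D(1)] by auto
    have "l2norm (\<lambda>m. (1/4) * (?A m + ?B m + ?C m + ?D m)) = (1/4) * l2norm (\<lambda>m. ?A m + ?B m + ?C m + ?D m)"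
      using l2_scale[OF ABCD(1), of "1/4"] by simp
    also have "\<dots> \<le> (1/4) * (4 * (opnorm k u * l2norm f))"
      using AB(2) ABC(2) ABCD(2) A(2) B(2) C(2) D(2) by simp
    finally show ?thesis unfolding e by simp
  qed
  have "opnorm k vc \<le> opnorm k u"
    unfolding opnorm_Sset[of k vc]
  proof (rule cSup_least[OF Sset_props(1)[OF vsuppc]])
    fix x assume "x \<in> Sset k vc"
    then obtain f where f: "x = l2norm ((fdiff ^^ k) (conv vc f)) / l2norm f" "is_l2 f" "f \<noteq> (\<lambda>_. 0)"
      unfolding Sset_def by blast
    have p: "l2norm f > 0" by (rule l2norm_pos[OF f(2,3)])
    show "x \<le> opnorm k u" unfolding f(1) using key[OF f(2)] p by (simp add: divide_le_eq)
  qed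
  with C show ?thesis by linarith
qed

end
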